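(* Let $k\ge 2$, let $G$ be a $K_k$-free graph on $n$ vertices containing an independent set $A$ of size $a$, and let $H$ be a complete multipartite graph. Then there is a complete $(k-1)$-partite graph $G'$ on $n$ vertices such that $\mathcal{N}(H,G)\le \mathcal{N}(H,G')$ and one of the parts of $G'$ has size at least $a$.
   Context: For graphs $H,G$, $\mathcal{N}(H,G)$ denotes the number of subgraphs of $G$ isomorphic to $H$. *)

theory Defs
  imports Main
begin

definition sgraph :: "'a set \<Rightarrow> 'a set set \<Rightarrow> bool" where
  "sgraph V E \<longleftrightarrow> finite V \<and> (\<forall>e\<in>E. e \<subseteq> V \<and> card e = 2)"

text \<open>Edge set of the complete multipartite graph on V whose parts are the fibres of p.\<close>
definition cmp_edges :: "'a set \<Rightarrow> ('a \<Rightarrow> nat) \<Rightarrow> 'a set set" where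
  "cmp_edges V p = {{u, v} | u v. u \<in> V \<and> v \<in> V \<and> p u \<noteq> p v}"

definition complete_multipartite :: "'a set \<Rightarrow> 'a set set \<Rightarrow> bool" where
  "complete_multipartite V E \<longleftrightarrow> (\<exists>p. E = cmp_edges V p)"

definition graph_iso :: "'b set \<Rightarrow> 'b set set \<Rightarrow> 'a set \<Rightarrow> 'a set set \<Rightarrow> bool" where
  "graph_iso V1 E1 V2 E2 \<longleftrightarrow>
     (\<exists>f. bij_betw f V1 V2 \<and> (\<forall>e. e \<subseteq> V1 \<longrightarrow> (e \<in> E1 \<longleftrightarrow> f ` e \<in> E2)))"

definition num_copies :: "'b set \<Rightarrow> 'b set set \<Rightarrow> 'a set \<Rightarrow> 'a set set \<Rightarrow> nat" where
  "num_copies VH EH V E = card {(V', E'). V' \<subseteq> V \<and> E' \<subseteq> E \<and> (\<forall>e\<in>E'. e \<subseteq> V')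
                                      \<and> graph_iso VH EH V' E'}"

definition clique_free :: "nat \<Rightarrow> 'a set \<Rightarrow> 'a set set \<Rightarrow> bool" where
  "clique_free k V E \<longleftrightarrow>
     \<not> (\<exists>S \<subseteq> V. card S = k \<and> (\<forall>u\<in>S. \<forall>v\<in>S. u \<noteq> v \<longrightarrow> {u, v} \<in> E))"

definition independent_set :: "'a set \<Rightarrow> 'a set \<Rightarrow> 'a set set \<Rightarrow> bool" where
  "independent_set A V E \<longleftrightarrow> A \<subseteq> V \<and> (\<forall>u\<in>A. \<forall>v\<in>A. {u, v} \<notin> E)"

end

theory Submission
  imports Defs
begin


definition clone :: "'a set set \<Rightarrow> 'a \<Rightarrow> 'a \<Rightarrow> 'a set set" where
  "clone E u v = {e \<in> E. u \<notin> e} \<union> {{u, w} | w. {v, w} \<in> E}"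

lemma clone_mem_nou: "u \<notin> e \<Longrightarrow> e \<in> clone E u v \<longleftrightarrow> e \<in> E"
  unfolding clone_def by auto

lemma clone_mem_u: "u \<noteq> w \<Longrightarrow> {u, w} \<in> clone E u v \<longleftrightarrow> {v, w} \<in> E"
  unfolding clone_def by (auto simp: doubleton_eq_iff)

lemma clone_single: "{v, u} \<notin> E \<Longrightarrow> {u} \<notin> clone E u v"
  unfolding clone_def by (auto simp: doubleton_eq_iff)

lemma sgraph_edge: "sgraph V E \<Longrightarrow> e \<in> E \<Longrightarrow> \<exists>x y. e = {x, y} \<and> x \<noteq> y \<and> x \<in> V \<and> y \<in> V"
  unfolding sgraph_def by (metis card_2_iff insert_subset)

lemma sgraph_clone:
  assumes "sgraph V E" "u \<in> V" "{u, v} \<notin> E"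
  shows "sgraph V (clone E u v)"
  unfolding sgraph_def
proof safe
  show "finite V" using assms(1) sgraph_def by blast
next
  fix e x assume "e \<in> clone E u v" "x \<in> e"
  then show "x \<in> V" using assms unfolding clone_def sgraph_def by auto
next
  fix e assume e: "e \<in> clone E u v"
  show "card e = 2"
  proof (cases "u \<in> e")
    case False then show ?thesis using e assms unfolding clone_def sgraph_def by auto
  next
    case True
    then obtain w where w: "e = {u, w}" "{v, w} \<in> E" using e unfolding clone_def by auto
    have "w \<noteq> u" using w assms(3) by (auto simp: insert_commute)
    then show ?thesis using w by simp
  qed
qed

lemma cmp_mem: "{a, b} \<in> cmp_edges V p \<longleftrightarrow> a \<in> V \<and> b \<in> V \<and> p a \<noteq> p b"
  unfolding cmp_edges_def by (auto simp: doubleton_eq_iff)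

definition cp :: "'b set \<Rightarrow> 'b set set \<Rightarrow> 'a set \<Rightarrow> 'a set set \<Rightarrow> ('a set \<times> 'a set set) set" where
  "cp VH EH V E = {(V', E'). V' \<subseteq> V \<and> E' \<subseteq> E \<and> (\<forall>e\<in>E'. e \<subseteq> V') \<and> graph_iso VH EH V' E'}"

lemma num_cp: "num_copies VH EH V E = card (cp VH EH V E)"
  unfolding num_copies_def cp_def by simp

lemma finite_cp: "sgraph V E \<Longrightarrow> finite (cp VH EH V E)"
proof -
  assume s: "sgraph V E"
  have "cp VH EH V E \<subseteq> Pow V \<times> Pow E" unfolding cp_def by auto
  moreover have "finite V" "E \<subseteq> Pow V" using s unfolding sgraph_def by auto
  ultimately show ?thesis by (meson finite_Pow_iff finite_SigmaI finite_subset)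
qed

lemma graph_iso_transfer:
  assumes "graph_iso VH EH V1 E1" "bij_betw g V1 V2" "\<forall>e. e \<subseteq> V1 \<longrightarrow> (e \<in> E1 \<longleftrightarrow> g ` e \<in> E2)"
  shows "graph_iso VH EH V2 E2"
proof -
  obtain f where f: "bij_betw f VH V1" "\<forall>e. e \<subseteq> VH \<longrightarrow> (e \<in> EH \<longleftrightarrow> f ` e \<in> E1)"
    using assms(1) unfolding graph_iso_def by blast
  have "bij_betw (g \<circ> f) VH V2" using f(1) assms(2) by (rule bij_betw_trans)
  moreover have "\<forall>e. e \<subseteq> VH \<longrightarrow> (e \<in> EH \<longleftrightarrow> (g \<circ> f) ` e \<in> E2)"
  proof safe
    fix e assume "e \<subseteq> VH"
    then have "f ` e \<subseteq> V1" using f(1) bij_betw_imp_surj_on by blast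
    then show "e \<in> EH \<Longrightarrow> (g \<circ> f) ` e \<in> E2" "(g \<circ> f) ` e \<in> E2 \<Longrightarrow> e \<in> EH"
      using f(2) assms(3) \<open>e \<subseteq> VH\<close> by (metis image_comp)+
  qed
  ultimately show ?thesis unfolding graph_iso_def by blast
qed

lemma split2:
  assumes "finite X"
  shows "card X = card {c\<in>X. P c} + card {c\<in>X. \<not> P c}"
proof -
  have "card ({c\<in>X. P c} \<union> {c\<in>X. \<not> P c}) = card {c\<in>X. P c} + card {c\<in>X. \<not> P c}"
    by (rule card_Un_disjoint) (use assms in auto)
  moreover have "{c\<in>X. P c} \<union> {c\<in>X. \<not> P c} = X" by blast
  ultimately show ?thesis by simp
qed

lemma split4:
  assumes "finite X"
  shows "card X = card {c\<in>X. \<not> P c \<and> \<not> Q c} + card {c\<in>X. \<not> P c \<and> Q c}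
     + card {c\<in>X. P c \<and> \<not> Q c} + card {c\<in>X. P c \<and> Q c}"
proof -
  have a: "card X = card {c\<in>X. P c} + card {c\<in>X. \<not> P c}" by (rule split2[OF assms])
  have b: "card {c\<in>X. P c} = card {c\<in>X. P c \<and> Q c} + card {c\<in>X. P c \<and> \<not> Q c}"
    using split2[of "{c\<in>X. P c}" Q] assms by simp
  have c: "card {c\<in>X. \<not> P c} = card {c\<in>X. \<not> P c \<and> Q c} + card {c\<in>X. \<not> P c \<and> \<not> Q c}"
    using split2[of "{c\<in>X. \<not> P c}" Q] assms by simp
  show ?thesis using a b c by simp
qed



definition swp :: "'a \<Rightarrow> 'a \<Rightarrow> 'a \<Rightarrow> 'a" where
  "swp u v x = (if x = u then v else if x = v then u else x)"

lemma swp_swp[simp]: "swp u v (swp u v x) = x"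
  unfolding swp_def by auto

lemma inj_swp: "inj (swp u v)"
  by (rule injI) (metis swp_swp)

lemma inj_image_swp: "inj (image (swp u v))"
  by (rule injI) (simp add: inj_image_eq_iff[OF inj_swp])

lemma cp_nou:
  assumes "u \<notin> V'"
  shows "(V', F) \<in> cp VH EH V E \<longleftrightarrow> (V', F) \<in> cp VH EH V (clone E u v)"
proof -
  have "(\<forall>e\<in>F. e \<subseteq> V') \<Longrightarrow> (F \<subseteq> E \<longleftrightarrow> F \<subseteq> clone E u v)"
  proof -
    assume h: "\<forall>e\<in>F. e \<subseteq> V'"
    then have "\<forall>e\<in>F. u \<notin> e" using assms by blast
    then show ?thesis by (auto simp: subset_iff clone_mem_nou)
  qed
  then show ?thesis unfolding cp_def by auto
qed

lemma cp_swap: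
  assumes s: "sgraph V E" and uV: "u \<in> V" and vV: "v \<in> V" and uv: "u \<noteq> v"
    and c: "(V', F) \<in> cp VH EH V E" and nu: "u \<notin> V'" and iv: "v \<in> V'"
  shows "(swp u v ` V', image (swp u v) ` F) \<in> cp VH EH V (clone E u v)"
        "u \<in> swp u v ` V'" "v \<notin> swp u v ` V'"
proof -
  let ?s = "swp u v"
  have V': "V' \<subseteq> V" "F \<subseteq> E" "\<forall>e\<in>F. e \<subseteq> V'" "graph_iso VH EH V' F"
    using c unfolding cp_def by auto
  have 1: "?s ` V' \<subseteq> V" using V'(1) uV vV unfolding swp_def by auto
  have 2: "image ?s ` F \<subseteq> clone E u v"
  proof
    fix e' assume "e' \<in> image ?s ` F"
    then obtain e where e: "e \<in> F" "e' = ?s ` e" by blast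
    then have eE: "e \<in> E" and ue: "u \<notin> e" using V' nu by auto
    obtain x y where xy: "e = {x, y}" "x \<noteq> y" using sgraph_edge[OF s eE] by blast
    show "e' \<in> clone E u v"
    proof (cases "v \<in> e")
      case True
      then obtain w where w: "e = {v, w}" "w \<noteq> v" using xy by auto
      have "w \<noteq> u" using ue w by auto
      then have "e' = {u, w}" using e w uv unfolding swp_def by auto
      then show ?thesis using clone_mem_u[of u w E v] \<open>w \<noteq> u\<close> eE w by auto
    next
      case False
      then have "e' = e" using e ue unfolding swp_def by (auto simp: image_def)
      then show ?thesis using clone_mem_nou[OF ue] eE by simp
    qed
  qed
  have 3: "\<forall>e'\<in>image ?s ` F. e' \<subseteq> ?s ` V'" using V'(3) by auto
  have 4: "graph_iso VH EH (?s ` V') (image ?s ` F)"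
  proof (rule graph_iso_transfer[OF V'(4)])
    show "bij_betw ?s V' (?s ` V')" by (rule inj_on_imp_bij_betw[OF inj_on_subset[OF inj_swp subset_UNIV]])
    show "\<forall>e. e \<subseteq> V' \<longrightarrow> (e \<in> F \<longleftrightarrow> ?s ` e \<in> image ?s ` F)"
      by (simp add: inj_image_mem_iff[OF inj_image_swp])
  qed
  show "(?s ` V', image ?s ` F) \<in> cp VH EH V (clone E u v)"
    unfolding cp_def using 1 2 3 4 by auto
  show "u \<in> ?s ` V'" using iv unfolding swp_def by force
  show "v \<notin> ?s ` V'" using nu uv unfolding swp_def by auto
qed

lemma cp_both:
  assumes s: "sgraph V E" and uv: "u \<noteq> v" and nuv: "{u, v} \<notin> E"
    and cm: "complete_multipartite VH EH"
    and c: "(V', F) \<in> cp VH EH V E" and iu: "u \<in> V'" and iv: "v \<in> V'"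
  shows "(V', F) \<in> cp VH EH V (clone E u v)"
proof -
  have V': "V' \<subseteq> V" "F \<subseteq> E" "\<forall>e\<in>F. e \<subseteq> V'" "graph_iso VH EH V' F"
    using c unfolding cp_def by auto
  obtain p where p: "EH = cmp_edges VH p" using cm unfolding complete_multipartite_def by blast
  obtain f where f: "bij_betw f VH V'" "\<forall>e. e \<subseteq> VH \<longrightarrow> (e \<in> EH \<longleftrightarrow> f ` e \<in> F)"
    using V'(4) unfolding graph_iso_def by blast
  define g where "g = inv_into VH f"
  have g: "\<And>x. x \<in> V' \<Longrightarrow> g x \<in> VH \<and> f (g x) = x"
    using f(1) unfolding g_def
    by (metis bij_betw_imp_surj_on f_inv_into_f inv_into_into)
  have edge: "\<And>x y. x \<in> V' \<Longrightarrow> y \<in> V' \<Longrightarrow> {x, y} \<in> F \<longleftrightarrow> p (g x) \<noteq> p (g y)"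
  proof -
    fix x y assume "x \<in> V'" "y \<in> V'"
    then have h1: "{g x, g y} \<subseteq> VH" "f ` {g x, g y} = {x, y}" using g by auto
    then have "{g x, g y} \<in> EH \<longleftrightarrow> {x, y} \<in> F" using f(2) by metis
    moreover have "{g x, g y} \<in> EH \<longleftrightarrow> p (g x) \<noteq> p (g y)" using h1(1) unfolding p cmp_mem by simp
    ultimately show "{x, y} \<in> F \<longleftrightarrow> p (g x) \<noteq> p (g y)" by simp
  qed
  have "F \<subseteq> clone E u v"
  proof
    fix e assume e: "e \<in> F"
    show "e \<in> clone E u v"
    proof (cases "u \<in> e")
      case False then show ?thesis using clone_mem_nou[OF False] e V'(2) by blast
    next
      case True
      obtain x y where xy: "e = {x, y}" "x \<noteq> y" using sgraph_edge[OF s] e V'(2) by blast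
      then obtain w where w: "e = {u, w}" "w \<noteq> u" using True by (cases "u = x") auto
      have wV: "w \<in> V'" using w e V'(3) by auto
      have "{u, v} \<notin> F" using nuv V'(2) by auto
      then have "p (g u) = p (g v)" using edge[OF iu iv] by simp
      moreover have "p (g u) \<noteq> p (g w)" using edge[OF iu wV] e w by simp
      ultimately have "{v, w} \<in> F" using edge[OF iv wV] by simp
      then have "{v, w} \<in> E" using V'(2) by auto
      then show ?thesis using clone_mem_u[of u w E v] w by simp
    qed
  qed
  then show ?thesis using V' unfolding cp_def by auto
qed

lemma clone_count:
  assumes s: "sgraph V E" and uV: "u \<in> V" and vV: "v \<in> V" and uv: "u \<noteq> v" and nuv: "{u, v} \<notin> E"
    and cm: "complete_multipartite VH EH"
  shows "card {c\<in>cp VH EH V E. \<not> u \<in> fst c \<and> \<not> v \<in> fst c}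
       + 2 * card {c\<in>cp VH EH V E. \<not> u \<in> fst c \<and> v \<in> fst c}
       + card {c\<in>cp VH EH V E. u \<in> fst c \<and> v \<in> fst c}
       \<le> card (cp VH EH V (clone E u v))"
proof -
  let ?X = "cp VH EH V E" and ?Y = "cp VH EH V (clone E u v)"
  have sc: "sgraph V (clone E u v)" using sgraph_clone[OF s uV nuv] .
  have fX: "finite ?X" and fY: "finite ?Y" using finite_cp s sc by auto
  have sp: "card ?Y = card {c\<in>?Y. \<not> u \<in> fst c \<and> \<not> v \<in> fst c} + card {c\<in>?Y. \<not> u \<in> fst c \<and> v \<in> fst c}
     + card {c\<in>?Y. u \<in> fst c \<and> \<not> v \<in> fst c} + card {c\<in>?Y. u \<in> fst c \<and> v \<in> fst c}"
    by (rule split4[OF fY])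
  have key: "\<And>c. u \<notin> fst c \<Longrightarrow> c \<in> ?Y \<longleftrightarrow> c \<in> ?X"
    using cp_nou by (metis prod.collapse)
  have key2: "\<And>c. c \<in> ?X \<Longrightarrow> u \<in> fst c \<Longrightarrow> v \<in> fst c \<Longrightarrow> c \<in> ?Y"
    using cp_both[OF s uv nuv cm] by (metis prod.collapse)
  have e1: "{c\<in>?Y. \<not> u \<in> fst c \<and> \<not> v \<in> fst c} = {c\<in>?X. \<not> u \<in> fst c \<and> \<not> v \<in> fst c}"
    using key by blast
  have e2: "{c\<in>?Y. \<not> u \<in> fst c \<and> v \<in> fst c} = {c\<in>?X. \<not> u \<in> fst c \<and> v \<in> fst c}"
    using key by blast
  have e3: "{c\<in>?X. u \<in> fst c \<and> v \<in> fst c} \<subseteq> {c\<in>?Y. u \<in> fst c \<and> v \<in> fst c}"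
    using key2 by blast
  define phi where "phi = (\<lambda>c::'a set \<times> 'a set set. (swp u v ` fst c, image (swp u v) ` snd c))"
  have inj: "inj phi"
  proof (rule injI)
    fix c d assume "phi c = phi d"
    then have h1: "image (swp u v) (fst c) = image (swp u v) (fst d)"
      and h2: "image (image (swp u v)) (snd c) = image (image (swp u v)) (snd d)"
      unfolding phi_def by auto
    have "fst c = fst d" using h1 by (simp add: inj_image_eq_iff[OF inj_swp])
    moreover have "snd c = snd d" using h2 by (simp add: inj_image_eq_iff[OF inj_image_swp])
    ultimately have "fst c = fst d" "snd c = snd d" by auto
    then show "c = d" by (simp add: prod_eq_iff)
  qed
  have e4: "phi ` {c\<in>?X. \<not> u \<in> fst c \<and> v \<in> fst c} \<subseteq> {c\<in>?Y. u \<in> fst c \<and> \<not> v \<in> fst c}"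
  proof
    fix d assume "d \<in> phi ` {c\<in>?X. \<not> u \<in> fst c \<and> v \<in> fst c}"
    then obtain c0 where c0: "c0 \<in> {c\<in>?X. \<not> u \<in> fst c \<and> v \<in> fst c}" "d = phi c0" by (rule imageE)
    obtain V' F where VF: "c0 = (V', F)" by (cases c0)
    have c: "(V', F) \<in> ?X" "u \<notin> V'" "v \<in> V'" using c0(1) VF by simp_all
    have dd: "d = (swp u v ` V', image (swp u v) ` F)" using c0(2) VF unfolding phi_def by simp
    note cs = cp_swap[OF s uV vV uv c(1-3)]
    show "d \<in> {c\<in>?Y. u \<in> fst c \<and> \<not> v \<in> fst c}"
      unfolding dd using cs by simp
  qed
  have "card {c\<in>?X. \<not> u \<in> fst c \<and> v \<in> fst c} \<le> card {c\<in>?Y. u \<in> fst c \<and> \<not> v \<in> fst c}"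
  proof (rule card_inj_on_le[OF _ e4])
    show "inj_on phi {c\<in>?X. \<not> u \<in> fst c \<and> v \<in> fst c}" using inj by (rule inj_on_subset) simp
    show "finite {c\<in>?Y. u \<in> fst c \<and> \<not> v \<in> fst c}" by (rule finite_subset[OF _ fY]) blast
  qed
  moreover have "card {c\<in>?X. u \<in> fst c \<and> v \<in> fst c} \<le> card {c\<in>?Y. u \<in> fst c \<and> v \<in> fst c}"
    using card_mono[OF _ e3] fY by simp
  ultimately show ?thesis using sp e1 e2 by simp
qed

lemma clone_sum:
  assumes s: "sgraph V E" and uV: "u \<in> V" and vV: "v \<in> V" and uv: "u \<noteq> v" and nuv: "{u, v} \<notin> E"
    and cm: "complete_multipartite VH EH"
  shows "2 * num_copies VH EH V E \<le> num_copies VH EH V (clone E u v) + num_copies VH EH V (clone E v u)"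
proof -
  let ?X = "cp VH EH V E"
  have fX: "finite ?X" by (rule finite_cp[OF s])
  have sp: "card ?X = card {c\<in>?X. \<not> u \<in> fst c \<and> \<not> v \<in> fst c} + card {c\<in>?X. \<not> u \<in> fst c \<and> v \<in> fst c}
     + card {c\<in>?X. u \<in> fst c \<and> \<not> v \<in> fst c} + card {c\<in>?X. u \<in> fst c \<and> v \<in> fst c}"
    by (rule split4[OF fX])
  have nvu: "{v, u} \<notin> E" using nuv by (simp add: insert_commute)
  have a: "card {c\<in>?X. \<not> u \<in> fst c \<and> \<not> v \<in> fst c}
       + 2 * card {c\<in>?X. \<not> u \<in> fst c \<and> v \<in> fst c}
       + card {c\<in>?X. u \<in> fst c \<and> v \<in> fst c} \<le> card (cp VH EH V (clone E u v))"
    by (rule clone_count[OF s uV vV uv nuv cm])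
  have b: "card {c\<in>?X. \<not> v \<in> fst c \<and> \<not> u \<in> fst c}
       + 2 * card {c\<in>?X. \<not> v \<in> fst c \<and> u \<in> fst c}
       + card {c\<in>?X. v \<in> fst c \<and> u \<in> fst c} \<le> card (cp VH EH V (clone E v u))"
    by (rule clone_count[OF s vV uV uv[symmetric] nvu cm])
  have c1: "{c\<in>?X. \<not> v \<in> fst c \<and> \<not> u \<in> fst c} = {c\<in>?X. \<not> u \<in> fst c \<and> \<not> v \<in> fst c}" by blast
  have c2: "{c\<in>?X. \<not> v \<in> fst c \<and> u \<in> fst c} = {c\<in>?X. u \<in> fst c \<and> \<not> v \<in> fst c}" by blast
  have c3: "{c\<in>?X. v \<in> fst c \<and> u \<in> fst c} = {c\<in>?X. u \<in> fst c \<and> v \<in> fst c}" by blast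
  have b': "card {c\<in>?X. \<not> u \<in> fst c \<and> \<not> v \<in> fst c}
       + 2 * card {c\<in>?X. u \<in> fst c \<and> \<not> v \<in> fst c}
       + card {c\<in>?X. u \<in> fst c \<and> v \<in> fst c} \<le> card (cp VH EH V (clone E v u))"
    using b unfolding c1 c2 c3 .
  show ?thesis unfolding num_cp using add_mono[OF a b'] sp by simp
qed



definition tw :: "'a set set \<Rightarrow> 'a \<Rightarrow> 'a \<Rightarrow> bool" where
  "tw E x y \<longleftrightarrow> {x, y} \<notin> E \<and> (\<forall>w. {x, w} \<in> E \<longleftrightarrow> {y, w} \<in> E)"

definition twc :: "'a set \<Rightarrow> 'a set set \<Rightarrow> nat" where
  "twc V E = card {(x, y). x \<in> V \<and> y \<in> V \<and> tw E x y}"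

lemma tw_sym: "tw E x y \<Longrightarrow> tw E y x"
  unfolding tw_def by (auto simp: insert_commute)

lemma tw_refl: "{x} \<notin> E \<Longrightarrow> tw E x x"
  unfolding tw_def by auto

lemma tw_trans: "tw E x y \<Longrightarrow> tw E y z \<Longrightarrow> tw E x z"
  unfolding tw_def by (metis insert_commute)

lemma sgraph_single: "sgraph V E \<Longrightarrow> {x} \<notin> E"
  unfolding sgraph_def by fastforce

lemma tw_preserve:
  assumes xu: "x \<noteq> u" and yu: "y \<noteq> u" and t: "tw E x y"
  shows "tw (clone E u v) x y"
  unfolding tw_def
proof (intro conjI allI)
  have "u \<notin> {x, y}" using xu yu by auto
  then have "{x, y} \<in> clone E u v \<longleftrightarrow> {x, y} \<in> E" by (rule clone_mem_nou)
  then show "{x, y} \<notin> clone E u v" using t unfolding tw_def by blast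
next
  fix w
  have xy: "\<And>w. {x, w} \<in> E \<longleftrightarrow> {y, w} \<in> E" using t unfolding tw_def by blast
  show "{x, w} \<in> clone E u v \<longleftrightarrow> {y, w} \<in> clone E u v"
  proof (cases "w = u")
    case True
    have e1: "{x, u} = {u, x}" "{y, u} = {u, y}" by auto
    have "{u, x} \<in> clone E u v \<longleftrightarrow> {v, x} \<in> E" using clone_mem_u xu by metis
    moreover have "{u, y} \<in> clone E u v \<longleftrightarrow> {v, y} \<in> E" using clone_mem_u yu by metis
    moreover have "{v, x} \<in> E \<longleftrightarrow> {v, y} \<in> E" using xy[of v] by (metis insert_commute)
    ultimately show ?thesis using True e1 by simp
  next
    case False
    have "u \<notin> {x, w}" "u \<notin> {y, w}" using xu yu False by auto
    then have "{x, w} \<in> clone E u v \<longleftrightarrow> {x, w} \<in> E" "{y, w} \<in> clone E u v \<longleftrightarrow> {y, w} \<in> E"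
      by (simp_all add: clone_mem_nou)
    then show ?thesis using xy[of w] by simp
  qed
qed

lemma tw_new:
  assumes yu: "y \<noteq> u" and t: "tw E v y" and nvu: "{v, u} \<notin> E"
  shows "tw (clone E u v) u y"
  unfolding tw_def
proof (intro conjI allI)
  have vy: "\<And>w. {v, w} \<in> E \<longleftrightarrow> {y, w} \<in> E" using t unfolding tw_def by blast
  have nvy: "{v, y} \<notin> E" using t unfolding tw_def by blast
  have uy: "{u, y} \<in> clone E u v \<longleftrightarrow> {v, y} \<in> E" using clone_mem_u yu by metis
  then show "{u, y} \<notin> clone E u v" using nvy by blast
  fix w
  show "{u, w} \<in> clone E u v \<longleftrightarrow> {y, w} \<in> clone E u v"
  proof (cases "w = u")
    case True
    have "{u} \<notin> clone E u v" using clone_single nvu by metis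
    moreover have "{y, u} = {u, y}" by auto
    ultimately show ?thesis using True uy nvy by simp
  next
    case False
    have "u \<notin> {y, w}" using yu False by auto
    then have "{y, w} \<in> clone E u v \<longleftrightarrow> {y, w} \<in> E" by (simp add: clone_mem_nou)
    moreover have "{u, w} \<in> clone E u v \<longleftrightarrow> {v, w} \<in> E" using clone_mem_u False by metis
    ultimately show ?thesis using vy[of w] by simp
  qed
qed

lemma twc_increase:
  assumes s: "sgraph V E" and uV: "u \<in> V" and vV: "v \<in> V" and uv: "u \<noteq> v"
    and nuv: "{u, v} \<notin> E" and ntw: "\<not> tw E u v"
    and le: "card {y\<in>V. tw E u y} \<le> card {y\<in>V. tw E v y}"
  shows "twc V E < twc V (clone E u v)"
proof -
  let ?E' = "clone E u v"
  define T where "T = {(x, y). x \<in> V \<and> y \<in> V \<and> tw E x y}"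
  define T' where "T' = {(x, y). x \<in> V \<and> y \<in> V \<and> tw ?E' x y}"
  define Cu where "Cu = {y\<in>V. tw E u y}"
  define Cv where "Cv = {y\<in>V. tw E v y}"
  have fV: "finite V" using s sgraph_def by blast
  have "T \<subseteq> V \<times> V" unfolding T_def by auto
  then have fT: "finite T" using fV finite_subset by blast
  have "T' \<subseteq> V \<times> V" unfolding T'_def by auto
  then have fT': "finite T'" using fV finite_subset by blast
  have fCv: "finite Cv" "finite Cu" unfolding Cv_def Cu_def using fV by auto
  define T0 where "T0 = {p\<in>T. fst p \<noteq> u \<and> snd p \<noteq> u}"
  define R where "R = {p\<in>T. fst p = u \<or> snd p = u}"
  have TR: "T = T0 \<union> R" "T0 \<inter> R = {}" unfolding T0_def R_def by auto
  have fT0: "finite T0" "finite R" using fT unfolding T0_def R_def by auto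
  have cT: "card T = card T0 + card R"
    unfolding TR(1) by (rule card_Un_disjoint[OF fT0 TR(2)])
  have RS: "R \<subseteq> ({u} \<times> Cu) \<union> (Cu \<times> {u})"
  proof
    fix p assume p: "p \<in> R"
    obtain x y where xy: "p = (x, y)" by (cases p)
    have h: "x \<in> V" "y \<in> V" "tw E x y" "x = u \<or> y = u" using p unfolding xy R_def T_def by simp_all
    show "p \<in> ({u} \<times> Cu) \<union> (Cu \<times> {u})"
    proof (cases "x = u")
      case True
      have "y \<in> Cu" unfolding Cu_def using h(2,3) True by simp
      then show ?thesis using xy True by simp
    next
      case False
      then have yu: "y = u" using h(4) by simp
      have "tw E u x" using tw_sym[OF h(3)] yu by simp
      have "x \<in> Cu" unfolding Cu_def using h(1) \<open>tw E u x\<close> by simp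
      then show ?thesis using xy yu by simp
    qed
  qed
  have "card R \<le> card (({u} \<times> Cu) \<union> (Cu \<times> {u}))"
    by (rule card_mono[OF _ RS]) (use fCv in auto)
  also have "\<dots> \<le> card ({u} \<times> Cu) + card (Cu \<times> {u})" by (rule card_Un_le)
  finally have cR: "card R \<le> 2 * card Cu" by (simp add: card_cartesian_product_singleton card_cartesian_product)
  define R' where "R' = ({u} \<times> Cv) \<union> (Cv \<times> {u}) \<union> {(u, u)}"
  have uCv: "u \<notin> Cv"
  proof
    assume "u \<in> Cv"
    then have "tw E v u" unfolding Cv_def by simp
    then show False using ntw tw_sym by metis
  qed
  have cR': "card R' = 2 * card Cv + 1"
  proof -
    have d1: "({u} \<times> Cv) \<inter> (Cv \<times> {u}) = {}" using uCv by auto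
    have f1: "finite ({u} \<times> Cv)" "finite (Cv \<times> {u})" using fCv by auto
    have "card (({u} \<times> Cv) \<union> (Cv \<times> {u})) = card ({u} \<times> Cv) + card (Cv \<times> {u})"
      by (rule card_Un_disjoint[OF f1 d1])
    then have c1: "card (({u} \<times> Cv) \<union> (Cv \<times> {u})) = card Cv + card Cv"
      by (simp add: card_cartesian_product_singleton card_cartesian_product)
    have "(u, u) \<notin> ({u} \<times> Cv) \<union> (Cv \<times> {u})" using uCv by auto
    moreover have "finite (({u} \<times> Cv) \<union> (Cv \<times> {u}))" using f1 by auto
    ultimately have "card (insert (u, u) (({u} \<times> Cv) \<union> (Cv \<times> {u}))) = card Cv + card Cv + 1"
      using c1 by simp
    moreover have "R' = insert (u, u) (({u} \<times> Cv) \<union> (Cv \<times> {u}))" unfolding R'_def by auto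
    ultimately show ?thesis by simp
  qed
  have nvu: "{v, u} \<notin> E" using nuv by (simp add: insert_commute)
  have sE': "sgraph V ?E'" using sgraph_clone[OF s uV nuv] .
  have R'T': "R' \<subseteq> T'"
  proof
    fix p assume "p \<in> R'"
    then consider (a) y where "p = (u, y)" "y \<in> Cv" | (b) y where "p = (y, u)" "y \<in> Cv" | (c) "p = (u, u)"
      unfolding R'_def by blast
    then show "p \<in> T'"
    proof cases
      case a
      then have h: "y \<noteq> u" "y \<in> V" "tw E v y" using uCv unfolding Cv_def by auto
      have "tw ?E' u y" by (rule tw_new[OF h(1) h(3) nvu])
      then show ?thesis using a uV h(2) unfolding T'_def by simp
    next
      case b
      then have h: "y \<noteq> u" "y \<in> V" "tw E v y" using uCv unfolding Cv_def by auto
      have "tw ?E' y u" by (rule tw_sym[OF tw_new[OF h(1) h(3) nvu]])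
      then show ?thesis using b uV h(2) unfolding T'_def by simp
    next
      case c
      have "tw ?E' u u" by (rule tw_refl[OF sgraph_single[OF sE']])
      then show ?thesis using c uV unfolding T'_def by simp
    qed
  qed
  have T0T': "T0 \<subseteq> T'"
  proof
    fix p assume p: "p \<in> T0"
    obtain x y where xy: "p = (x, y)" by (cases p)
    have h: "x \<in> V" "y \<in> V" "tw E x y" "x \<noteq> u" "y \<noteq> u" using p unfolding xy T0_def T_def by simp_all
    have "tw ?E' x y" by (rule tw_preserve[OF h(4) h(5) h(3)])
    then show "p \<in> T'" using h unfolding xy T'_def by simp
  qed
  have dj: "T0 \<inter> R' = {}" unfolding T0_def R'_def by auto
  have fR': "finite R'" using fT' R'T' finite_subset by blast
  have "card T0 + card R' = card (T0 \<union> R')" by (rule card_Un_disjoint[symmetric, OF fT0(1) fR' dj])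
  also have "\<dots> \<le> card T'" by (rule card_mono[OF fT']) (use T0T' R'T' in blast)
  finally have "card T0 + card R' \<le> card T'" .
  then have "card T < card T'" using cT cR cR' le unfolding Cu_def Cv_def by linarith
  then show ?thesis unfolding twc_def T_def T'_def .
qed

lemma clique_free_clone:
  assumes s: "sgraph V E" and uV: "u \<in> V" and vV: "v \<in> V" and uv: "u \<noteq> v" and nuv: "{u, v} \<notin> E"
    and cf: "clique_free k V E"
  shows "clique_free k V (clone E u v)"
  unfolding clique_free_def
proof
  assume "\<exists>S\<subseteq>V. card S = k \<and> (\<forall>x\<in>S. \<forall>y\<in>S. x \<noteq> y \<longrightarrow> {x, y} \<in> clone E u v)"
  then obtain S where S: "S \<subseteq> V" "card S = k" and S3: "\<And>x y. x \<in> S \<Longrightarrow> y \<in> S \<Longrightarrow> x \<noteq> y \<Longrightarrow> {x, y} \<in> clone E u v"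
    by blast
  have a: "\<And>x y. x \<in> S - {u} \<Longrightarrow> y \<in> S - {u} \<Longrightarrow> x \<noteq> y \<Longrightarrow> {x, y} \<in> E"
  proof -
    fix x y assume h: "x \<in> S - {u}" "y \<in> S - {u}" "x \<noteq> y"
    then have "u \<notin> {x, y}" by auto
    moreover have "{x, y} \<in> clone E u v" using S3 h by simp
    ultimately show "{x, y} \<in> E" using clone_mem_nou by metis
  qed
  show False
  proof (cases "u \<in> S")
    case False
    then have "S - {u} = S" by simp
    then have "\<forall>x\<in>S. \<forall>y\<in>S. x \<noteq> y \<longrightarrow> {x, y} \<in> E" using a by metis
    then show False using cf S unfolding clique_free_def by blast
  next
    case True
    have "{u, v} \<in> clone E u v \<longleftrightarrow> {v, v} \<in> E" by (rule clone_mem_u[OF uv])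
    moreover have "{v, v} \<notin> E" using sgraph_single[OF s] by simp
    ultimately have nc: "{u, v} \<notin> clone E u v" by simp
    have vS: "v \<notin> S"
    proof
      assume "v \<in> S"
      then have "{u, v} \<in> clone E u v" using S3 True uv by simp
      then show False using nc by simp
    qed
    define S' where "S' = insert v (S - {u})"
    have "finite V" using s unfolding sgraph_def by simp
    then have fS: "finite S" using S(1) by (rule finite_subset[rotated])
    have "v \<notin> S - {u}" using vS by simp
    then have "card S' = Suc (card (S - {u}))" unfolding S'_def using fS by simp
    also have "\<dots> = card S"
    proof -
      have "card (S - {u}) = card S - 1" using True by (rule card_Diff_singleton)
      moreover have "card S > 0" using True fS card_gt_0_iff by blast
      ultimately show ?thesis by simp
    qed
    finally have cS': "card S' = k" using S(2) by simp
    have S'V: "S' \<subseteq> V" unfolding S'_def using S(1) vV by auto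
    have b: "\<And>x. x \<in> S - {u} \<Longrightarrow> {v, x} \<in> E"
    proof -
      fix x assume h: "x \<in> S - {u}"
      then have "u \<noteq> x" by blast
      moreover have "{u, x} \<in> clone E u v" using S3 h True by auto
      ultimately show "{v, x} \<in> E" using clone_mem_u by metis
    qed
    have "\<forall>x\<in>S'. \<forall>y\<in>S'. x \<noteq> y \<longrightarrow> {x, y} \<in> E"
    proof (intro ballI impI)
      fix x y assume xy: "x \<in> S'" "y \<in> S'" "x \<noteq> y"
      show "{x, y} \<in> E"
      proof (cases "x = v")
        case True
        then have "y \<in> S - {u}" using xy unfolding S'_def by simp
        then show ?thesis using b True by simp
      next
        case False
        then have x': "x \<in> S - {u}" using xy unfolding S'_def by simp
        show ?thesis
        proof (cases "y = v")
          case True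
          then have "{v, x} \<in> E" using b x' by simp
          then show ?thesis using True by (simp add: insert_commute)
        next
          case False
          then have "y \<in> S - {u}" using xy unfolding S'_def by simp
          then show ?thesis using a x' xy(3) by simp
        qed
      qed
    qed
    then show False using cf cS' S'V unfolding clique_free_def by blast
  qed
qed

lemma indep_clone:
  assumes ind: "independent_set A V E" and c: "u \<notin> A \<or> (\<forall>w\<in>A. {v, w} \<notin> E)"
  shows "independent_set A V (clone E u v)"
  unfolding independent_set_def
proof (intro conjI ballI)
  show "A \<subseteq> V" using ind unfolding independent_set_def by simp
  fix x y assume xy: "x \<in> A" "y \<in> A"
  have nE: "{x, y} \<notin> E" using ind xy unfolding independent_set_def by simp
  show "{x, y} \<notin> clone E u v"
  proof
    assume "{x, y} \<in> clone E u v"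
    then consider "{x, y} \<in> E" | w where "{x, y} = {u, w}" "{v, w} \<in> E" unfolding clone_def by blast
    then show False
    proof cases
      case 1 then show ?thesis using nE by simp
    next
      case 2
      then have "u \<in> A" "w \<in> A" using xy by (auto simp: doubleton_eq_iff)
      then show ?thesis using c 2(2) by simp
    qed
  qed
qed



lemma good_pair_aux:
  assumes ind: "independent_set A V E" and s: "sgraph V E"
    and uV: "u \<in> V" and vV: "v \<in> V" and uv: "u \<noteq> v" and nuv: "{u, v} \<notin> E" and ntw: "\<not> tw E u v"
    and uA: "u \<in> A" and vA: "v \<notin> A"
  shows "\<exists>x y. x \<in> V \<and> y \<in> V \<and> x \<noteq> y \<and> {x, y} \<notin> E \<and> \<not> tw E x y
     \<and> (x \<notin> A \<or> (\<forall>w\<in>A. {y, w} \<notin> E)) \<and> (y \<notin> A \<or> (\<forall>w\<in>A. {x, w} \<notin> E))"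
proof (cases "\<forall>w\<in>A. {v, w} \<notin> E")
  case True
  then show ?thesis using uV vV uv nuv ntw vA by blast
next
  case False
  then obtain a1 where a1: "a1 \<in> A" "{v, a1} \<in> E" by blast
  have AV: "A \<subseteq> V" and indA: "\<And>x y. x \<in> A \<Longrightarrow> y \<in> A \<Longrightarrow> {x, y} \<notin> E"
    using ind unfolding independent_set_def by auto
  have a1V: "a1 \<in> V" using a1(1) AV by blast
  have ua1: "u \<noteq> a1"
  proof
    assume "u = a1"
    then have "{v, u} \<in> E" using a1(2) by simp
    then show False using nuv by (simp add: insert_commute)
  qed
  have n1: "{u, a1} \<notin> E" using indA[OF uA a1(1)] .
  have n2: "\<not> tw E u a1"
  proof
    assume "tw E u a1"
    then have "{u, v} \<in> E \<longleftrightarrow> {a1, v} \<in> E" unfolding tw_def by blast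
    moreover have "{a1, v} \<in> E" using a1(2) by (simp add: insert_commute)
    ultimately show False using nuv by simp
  qed
  have c1: "\<forall>w\<in>A. {a1, w} \<notin> E" using indA a1(1) by blast
  have c2: "\<forall>w\<in>A. {u, w} \<notin> E" using indA uA by blast
  show ?thesis
    apply (rule exI[of _ u], rule exI[of _ a1])
    using uV a1V ua1 n1 n2 c1 c2 by simp
qed

lemma good_pair:
  assumes ind: "independent_set A V E" and s: "sgraph V E"
    and uV: "u \<in> V" and vV: "v \<in> V" and uv: "u \<noteq> v" and nuv: "{u, v} \<notin> E" and ntw: "\<not> tw E u v"
  shows "\<exists>x y. x \<in> V \<and> y \<in> V \<and> x \<noteq> y \<and> {x, y} \<notin> E \<and> \<not> tw E x y
     \<and> (x \<notin> A \<or> (\<forall>w\<in>A. {y, w} \<notin> E)) \<and> (y \<notin> A \<or> (\<forall>w\<in>A. {x, w} \<notin> E))"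
proof -
  have AV: "A \<subseteq> V" and indA: "\<And>x y. x \<in> A \<Longrightarrow> y \<in> A \<Longrightarrow> {x, y} \<notin> E"
    using ind unfolding independent_set_def by auto
  consider "u \<in> A" "v \<in> A" | "u \<notin> A" "v \<notin> A" | "u \<in> A" "v \<notin> A" | "u \<notin> A" "v \<in> A" by blast
  then show ?thesis
  proof cases
    case 1
    have "\<forall>w\<in>A. {v, w} \<notin> E" "\<forall>w\<in>A. {u, w} \<notin> E" using indA 1 by blast+
    then show ?thesis using uV vV uv nuv ntw by blast
  next
    case 2
    then show ?thesis using uV vV uv nuv ntw by blast
  next
    case 3
    show ?thesis by (rule good_pair_aux[OF ind s uV vV uv nuv ntw 3])
  next
    case 4
    have nvu: "{v, u} \<notin> E" using nuv by (simp add: insert_commute)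
    have ntw': "\<not> tw E v u" using ntw tw_sym by metis
    show ?thesis by (rule good_pair_aux[OF ind s vV uV uv[symmetric] nvu ntw' 4(2) 4(1)])
  qed
qed

definition admissible :: "nat \<Rightarrow> 'a set \<Rightarrow> 'a set \<Rightarrow> 'a set set \<Rightarrow> bool" where
  "admissible k A V F \<longleftrightarrow> F \<subseteq> Pow V \<and> sgraph V F \<and> clique_free k V F \<and> independent_set A V F"

lemma admissible_clone:
  assumes adm: "admissible k A V E" and uV: "u \<in> V" and vV: "v \<in> V" and uv: "u \<noteq> v" and nuv: "{u, v} \<notin> E"
    and c: "u \<notin> A \<or> (\<forall>w\<in>A. {v, w} \<notin> E)"
  shows "admissible k A V (clone E u v)"
proof -
  have s: "sgraph V E" and cf: "clique_free k V E" and ind: "independent_set A V E"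
    using adm unfolding admissible_def by auto
  have s': "sgraph V (clone E u v)" by (rule sgraph_clone[OF s uV nuv])
  have "clone E u v \<subseteq> Pow V" using s' unfolding sgraph_def by auto
  moreover have "clique_free k V (clone E u v)" by (rule clique_free_clone[OF s uV vV uv nuv cf])
  moreover have "independent_set A V (clone E u v)" by (rule indep_clone[OF ind c])
  ultimately show ?thesis using s' unfolding admissible_def by simp
qed

lemma class_eq:
  assumes s: "sgraph V E" and xV: "x \<in> V" and yV: "y \<in> V"
  shows "{z\<in>V. tw E x z} = {z\<in>V. tw E y z} \<longleftrightarrow> tw E x y"
proof
  assume h: "{z\<in>V. tw E x z} = {z\<in>V. tw E y z}"
  have "tw E y y" by (rule tw_refl[OF sgraph_single[OF s]])
  then have "y \<in> {z\<in>V. tw E y z}" using yV by simp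
  then have "y \<in> {z\<in>V. tw E x z}" using h by simp
  then show "tw E x y" by simp
next
  assume h: "tw E x y"
  have "\<And>z. tw E x z \<longleftrightarrow> tw E y z"
  proof
    fix z assume "tw E x z" then show "tw E y z" using tw_trans[OF tw_sym[OF h]] by simp
  next
    fix z assume "tw E y z" then show "tw E x z" using tw_trans[OF h] by simp
  qed
  then show "{z\<in>V. tw E x z} = {z\<in>V. tw E y z}" by simp
qed



lemma no_bad_pair:
  assumes cm: "complete_multipartite VH EH"
    and adm: "admissible k A V Es"
    and maxN: "\<And>F. admissible k A V F \<Longrightarrow> num_copies VH EH V F \<le> num_copies VH EH V Es"
    and maxg: "\<And>F. admissible k A V F \<Longrightarrow> num_copies VH EH V F = num_copies VH EH V Es \<Longrightarrow> twc V F \<le> twc V Es"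
    and xV: "x \<in> V" and yV: "y \<in> V" and xy: "x \<noteq> y" and nxy: "{x, y} \<notin> Es"
  shows "tw Es x y"
proof (rule ccontr)
  assume ntw0: "\<not> tw Es x y"
  have s: "sgraph V Es" and ind: "independent_set A V Es" using adm unfolding admissible_def by auto
  obtain u v where uv: "u \<in> V" "v \<in> V" "u \<noteq> v" "{u, v} \<notin> Es" "\<not> tw Es u v"
    "u \<notin> A \<or> (\<forall>w\<in>A. {v, w} \<notin> Es)" "v \<notin> A \<or> (\<forall>w\<in>A. {u, w} \<notin> Es)"
    using good_pair[OF ind s xV yV xy nxy ntw0] by blast
  have nvu: "{v, u} \<notin> Es" using uv(4) by (simp add: insert_commute)
  have ntw': "\<not> tw Es v u" using uv(5) tw_sym by metis
  have a1: "admissible k A V (clone Es u v)" by (rule admissible_clone[OF adm uv(1-4) uv(6)])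
  have a2: "admissible k A V (clone Es v u)" by (rule admissible_clone[OF adm uv(2) uv(1) uv(3)[symmetric] nvu uv(7)])
  have sum: "2 * num_copies VH EH V Es \<le> num_copies VH EH V (clone Es u v) + num_copies VH EH V (clone Es v u)"
    by (rule clone_sum[OF s uv(1-4) cm])
  have l1: "num_copies VH EH V (clone Es u v) \<le> num_copies VH EH V Es" by (rule maxN[OF a1])
  have l2: "num_copies VH EH V (clone Es v u) \<le> num_copies VH EH V Es" by (rule maxN[OF a2])
  have q1: "num_copies VH EH V (clone Es u v) = num_copies VH EH V Es" using sum l1 l2 by linarith
  have q2: "num_copies VH EH V (clone Es v u) = num_copies VH EH V Es" using sum l1 l2 by linarith
  show False
  proof (cases "card {z\<in>V. tw Es u z} \<le> card {z\<in>V. tw Es v z}")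
    case True
    have "twc V Es < twc V (clone Es u v)" by (rule twc_increase[OF s uv(1-5) True])
    moreover have "twc V (clone Es u v) \<le> twc V Es" by (rule maxg[OF a1 q1])
    ultimately show False by simp
  next
    case False
    then have le: "card {z\<in>V. tw Es v z} \<le> card {z\<in>V. tw Es u z}" by simp
    have "twc V Es < twc V (clone Es v u)" by (rule twc_increase[OF s uv(2) uv(1) uv(3)[symmetric] nvu ntw' le])
    moreover have "twc V (clone Es v u) \<le> twc V Es" by (rule maxg[OF a2 q2])
    ultimately show False by simp
  qed
qed

lemma exists_max:
  assumes adm: "admissible k A V E" and fV: "finite V"
  obtains Es where "admissible k A V Es" "num_copies VH EH V E \<le> num_copies VH EH V Es"
    "\<And>F. admissible k A V F \<Longrightarrow> num_copies VH EH V F \<le> num_copies VH EH V Es"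
    "\<And>F. admissible k A V F \<Longrightarrow> num_copies VH EH V F = num_copies VH EH V Es \<Longrightarrow> twc V F \<le> twc V Es"
proof -
  define S where "S = {F. admissible k A V F}"
  have "S \<subseteq> Pow (Pow V)" unfolding S_def admissible_def by auto
  then have fS: "finite S" using fV by (simp add: finite_subset)
  have ES: "E \<in> S" using adm unfolding S_def by simp
  define N where "N = (\<lambda>F. num_copies VH EH V F)"
  define m where "m = Max (N ` S)"
  have mge: "\<And>F. F \<in> S \<Longrightarrow> N F \<le> m" unfolding m_def using fS by simp
  have "m \<in> N ` S" unfolding m_def using fS ES by (intro Max_in) auto
  then obtain F0 where F0: "F0 \<in> S" "N F0 = m" by auto
  define S1 where "S1 = {F\<in>S. N F = m}"
  have fS1: "finite S1" unfolding S1_def using fS by simp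
  have F0S1: "F0 \<in> S1" unfolding S1_def using F0 by simp
  define g where "g = Max (twc V ` S1)"
  have "g \<in> twc V ` S1" unfolding g_def using fS1 F0S1 by (intro Max_in) auto
  then obtain Es where Es: "Es \<in> S1" "twc V Es = g" by auto
  have gge: "\<And>F. F \<in> S1 \<Longrightarrow> twc V F \<le> g" unfolding g_def using fS1 by simp
  have EsS: "Es \<in> S" "N Es = m" using Es(1) unfolding S1_def by auto
  show ?thesis
  proof (rule that)
    show "admissible k A V Es" using EsS(1) unfolding S_def by simp
    show "num_copies VH EH V E \<le> num_copies VH EH V Es" using mge[OF ES] EsS(2) unfolding N_def by simp
    fix F assume aF: "admissible k A V F"
    then have FS: "F \<in> S" unfolding S_def by simp
    show "num_copies VH EH V F \<le> num_copies VH EH V Es" using mge[OF FS] EsS(2) unfolding N_def by simp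
    assume "num_copies VH EH V F = num_copies VH EH V Es"
    then have "F \<in> S1" using FS EsS(2) unfolding S1_def N_def by simp
    then show "twc V F \<le> twc V Es" using gge Es(2) by simp
  qed
qed



lemma final_structure:
  assumes s: "sgraph V Es" and cf: "clique_free k V Es"
    and twall: "\<And>x y. x \<in> V \<Longrightarrow> y \<in> V \<Longrightarrow> x \<noteq> y \<Longrightarrow> {x, y} \<notin> Es \<Longrightarrow> tw Es x y"
  shows "\<exists>p :: 'a \<Rightarrow> nat. (\<forall>v\<in>V. p v < k - 1) \<and> Es = cmp_edges V p
           \<and> (\<forall>x\<in>V. \<forall>y\<in>V. p x = p y \<longleftrightarrow> tw Es x y)"
proof -
  have fV: "finite V" using s unfolding sgraph_def by simp
  define cls where "cls = (\<lambda>x. {z\<in>V. tw Es x z})"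
  define Cls where "Cls = cls ` V"
  have fC: "finite Cls" unfolding Cls_def using fV by simp
  have ceq: "\<And>x y. x \<in> V \<Longrightarrow> y \<in> V \<Longrightarrow> cls x = cls y \<longleftrightarrow> tw Es x y"
    unfolding cls_def by (rule class_eq[OF s])
  have cardC: "card Cls \<le> k - 1"
  proof (rule ccontr)
    assume "\<not> card Cls \<le> k - 1"
    then have "k \<le> card Cls" by simp
    then obtain T where T: "T \<subseteq> Cls" "card T = k" "finite T" by (rule obtain_subset_with_card_n)
    define rep where "rep = inv_into V cls"
    have rep: "\<And>C. C \<in> T \<Longrightarrow> rep C \<in> V \<and> cls (rep C) = C"
    proof -
      fix C assume "C \<in> T"
      then have "C \<in> cls ` V" using T(1) unfolding Cls_def by blast
      then show "rep C \<in> V \<and> cls (rep C) = C" unfolding rep_def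
        by (simp add: inv_into_into f_inv_into_f)
    qed
    have injr: "inj_on rep T"
    proof (rule inj_onI)
      fix C D assume "C \<in> T" "D \<in> T" "rep C = rep D"
      then show "C = D" using rep by metis
    qed
    define R where "R = rep ` T"
    have cR: "card R = k" unfolding R_def using card_image[OF injr] T(2) by simp
    have RV: "R \<subseteq> V" unfolding R_def using rep by blast
    have "\<forall>x\<in>R. \<forall>y\<in>R. x \<noteq> y \<longrightarrow> {x, y} \<in> Es"
    proof (intro ballI impI)
      fix x y assume h: "x \<in> R" "y \<in> R" "x \<noteq> y"
      obtain C where C: "C \<in> T" "x = rep C" using h(1) unfolding R_def by blast
      obtain D where D: "D \<in> T" "y = rep D" using h(2) unfolding R_def by blast
      have xV: "x \<in> V" and cx: "cls x = C" using rep[OF C(1)] C(2) by simp_all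
      have yV: "y \<in> V" and cy: "cls y = D" using rep[OF D(1)] D(2) by simp_all
      show "{x, y} \<in> Es"
      proof (rule ccontr)
        assume "{x, y} \<notin> Es"
        then have "tw Es x y" using twall xV yV h(3) by simp
        then have "C = D" using ceq[OF xV yV] cx cy by simp
        then show False using C(2) D(2) h(3) by simp
      qed
    qed
    then show False using cf cR RV unfolding clique_free_def by blast
  qed
  obtain h where h: "bij_betw h Cls {0..<card Cls}" using ex_bij_betw_finite_nat[OF fC] by blast
  define p where "p = (\<lambda>x. h (cls x))"
  have clsC: "\<And>x. x \<in> V \<Longrightarrow> cls x \<in> Cls" unfolding Cls_def by simp
  have pr: "\<forall>v\<in>V. p v < k - 1"
  proof
    fix v assume "v \<in> V"
    then have "h (cls v) \<in> {0..<card Cls}" using h clsC bij_betwE by blast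
    then show "p v < k - 1" unfolding p_def using cardC by simp
  qed
  have peq: "\<And>x y. x \<in> V \<Longrightarrow> y \<in> V \<Longrightarrow> p x = p y \<longleftrightarrow> tw Es x y"
  proof -
    fix x y assume xy: "x \<in> V" "y \<in> V"
    have "inj_on h Cls" using h bij_betw_def by blast
    then have "p x = p y \<longleftrightarrow> cls x = cls y" unfolding p_def using clsC xy inj_on_eq_iff by metis
    then show "p x = p y \<longleftrightarrow> tw Es x y" using ceq[OF xy] by simp
  qed
  have "Es = cmp_edges V p"
  proof
    show "Es \<subseteq> cmp_edges V p"
    proof
      fix e assume e: "e \<in> Es"
      obtain x y where xy: "e = {x, y}" "x \<noteq> y" "x \<in> V" "y \<in> V" using sgraph_edge[OF s e] by blast
      have "\<not> tw Es x y" using e xy(1) unfolding tw_def by simp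
      then have "p x \<noteq> p y" using peq xy(3,4) by simp
      then show "e \<in> cmp_edges V p" using xy cmp_mem by metis
    qed
  next
    show "cmp_edges V p \<subseteq> Es"
    proof
      fix e assume e: "e \<in> cmp_edges V p"
      then obtain x y where xy: "e = {x, y}" "x \<in> V" "y \<in> V" "p x \<noteq> p y"
        unfolding cmp_edges_def by blast
      have "x \<noteq> y" using xy(4) by blast
      moreover have "\<not> tw Es x y" using peq xy(2-4) by simp
      ultimately show "e \<in> Es" using twall xy(1-3) by blast
    qed
  qed
  then show ?thesis using pr peq by blast
qed


theorem proposition4p4:
  fixes V :: "'a set" and E :: "'a set set" and A :: "'a set"
    and VH :: "'b set" and EH :: "'b set set" and k n a :: nat
  assumes "k \<ge> 2"
    and "sgraph V E" and "card V = n"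
    and "clique_free k V E"
    and "independent_set A V E" and "card A = a"
    and "sgraph VH EH" and "complete_multipartite VH EH"
  shows "\<exists>p :: 'a \<Rightarrow> nat. (\<forall>v\<in>V. p v < k - 1)
           \<and> (\<exists>i < k - 1. a \<le> card {v \<in> V. p v = i})
           \<and> num_copies VH EH V E \<le> num_copies VH EH V (cmp_edges V p)"
proof -
  have fV: "finite V" using assms(2) unfolding sgraph_def by simp
  have "E \<subseteq> Pow V" using assms(2) unfolding sgraph_def by auto
  then have adm: "admissible k A V E" using assms(2,4,5) unfolding admissible_def by simp
  obtain Es where Es: "admissible k A V Es" "num_copies VH EH V E \<le> num_copies VH EH V Es"
    "\<And>F. admissible k A V F \<Longrightarrow> num_copies VH EH V F \<le> num_copies VH EH V Es"
    "\<And>F. admissible k A V F \<Longrightarrow> num_copies VH EH V F = num_copies VH EH V Es \<Longrightarrow> twc V F \<le> twc V Es"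
    using exists_max[OF adm fV, of VH EH] by blast
  have twall: "\<And>x y. x \<in> V \<Longrightarrow> y \<in> V \<Longrightarrow> x \<noteq> y \<Longrightarrow> {x, y} \<notin> Es \<Longrightarrow> tw Es x y"
    by (rule no_bad_pair[OF assms(8) Es(1) Es(3) Es(4)])
  have sE: "sgraph V Es" and cfE: "clique_free k V Es" and indE: "independent_set A V Es"
    using Es(1) unfolding admissible_def by auto
  obtain p :: "'a \<Rightarrow> nat" where p: "\<forall>v\<in>V. p v < k - 1" "Es = cmp_edges V p"
    "\<forall>x\<in>V. \<forall>y\<in>V. p x = p y \<longleftrightarrow> tw Es x y"
    using final_structure[OF sE cfE twall] by blast
  have part: "\<exists>i < k - 1. a \<le> card {v \<in> V. p v = i}"
  proof (cases "A = {}")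
    case True
    then have "a = 0" using assms(6) by simp
    moreover have "(0::nat) < k - 1" using assms(1) by simp
    ultimately show ?thesis by blast
  next
    case False
    then obtain a0 where a0: "a0 \<in> A" by blast
    have AV: "A \<subseteq> V" and indA: "\<And>x y. x \<in> A \<Longrightarrow> y \<in> A \<Longrightarrow> {x, y} \<notin> Es"
      using indE unfolding independent_set_def by auto
    have a0V: "a0 \<in> V" using a0 AV by blast
    have sub: "A \<subseteq> {v \<in> V. p v = p a0}"
    proof
      fix b assume b: "b \<in> A"
      have bV: "b \<in> V" using b AV by blast
      have "p b = p a0"
      proof (cases "b = a0")
        case True then show ?thesis by simp
      next
        case False
        have "tw Es b a0" by (rule twall[OF bV a0V False indA[OF b a0]])
        then show ?thesis using p(3) bV a0V by simp
      qed
      then show "b \<in> {v \<in> V. p v = p a0}" using bV by simp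
    qed
    have "card A \<le> card {v \<in> V. p v = p a0}" by (rule card_mono) (use fV sub in auto)
    then show ?thesis using p(1) a0V assms(6) by blast
  qed
  show ?thesis using p(1) part Es(2) p(2) by blast
qed

end
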